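(* Let $\lambda^0$ be a constant fourth-order tensor on $\mathbb{R}^3$ with minor and major symmetries ($\lambda^0_{ijkl}=\lambda^0_{jikl}=\lambda^0_{ijlk}=\lambda^0_{klij}$) which is positive definite on symmetric matrices ($\xi:\lambda^0:\xi>0$ for every nonzero real symmetric $3\times3$ matrix $\xi$). For every $q\in\mathbb{R}^3$, the $3\times 3$ matrix $M(q)$ with entries $M_{jk}(q)=\sum_{i,l}\lambda^0_{ijkl}\big(\overline{D_i(q)}D_l(q)+D_i(q)\overline{D_l(q)}\big)$ is real, symmetric and positive semidefinite, and it is positive definite (hence invertible) if and only if $D(q)\neq 0$, i.e. if and only if $q\notin 2\pi\mathbb{Z}^3\cup\big((\pi,\pi,\pi)+2\pi\mathbb{Z}^3\big)$.
   Context: Let $T=\{\tfrac12(1,1,1),\ \tfrac12(1,-1,-1),\ \tfrac12(-1,1,-1),\ \tfrac12(-1,-1,1)\}$. For $q\in\mathbb{R}^3$, $D(q)\in\mathbb{C}^3$ is defined by $D_i(q)=\sum_{e\in T} e_i\, e^{i q\cdot e}$ ($i=1,2,3$). The overline denotes complex conjugation. (The matrix $M(q)$ is the inverse of the discrete displacement Green function $\Omega(q)$ of the tetrahedral scheme.) *)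

theory Defs
  imports "HOL-Analysis.Analysis"
begin

definition tetT :: "(real^3) set" where
  "tetT = {vector [1/2, 1/2, 1/2], vector [1/2, -1/2, -1/2],
           vector [-1/2, 1/2, -1/2], vector [-1/2, -1/2, 1/2]}"

definition Dvec :: "real^3 \<Rightarrow> complex^3" where
  "Dvec q = (\<chi> i. \<Sum>e\<in>tetT. of_real (e $ i) * exp (\<i> * of_real (q \<bullet> e)))"

definition Mmat :: "(3 \<Rightarrow> 3 \<Rightarrow> 3 \<Rightarrow> 3 \<Rightarrow> real) \<Rightarrow> real^3 \<Rightarrow> complex^3^3" where
  "Mmat lam q = (\<chi> j k. \<Sum>i\<in>UNIV. \<Sum>l\<in>UNIV. of_real (lam i j k l) *
       (cnj (Dvec q $ i) * Dvec q $ l + Dvec q $ i * cnj (Dvec q $ l)))"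

text \<open>The real part of M (M will be shown to be real).\<close>
definition MmatR :: "(3 \<Rightarrow> 3 \<Rightarrow> 3 \<Rightarrow> 3 \<Rightarrow> real) \<Rightarrow> real^3 \<Rightarrow> real^3^3" where
  "MmatR lam q = (\<chi> j k. Re (Mmat lam q $ j $ k))"

end

theory Submission
  imports Defs
begin


lemma cnj_aux: "cnj z * w + z * cnj w = complex_of_real (2*(Re z*Re w + Im z*Im w))"
  by (simp add: complex_eq_iff)

lemma M_eq: "Mmat lam q $ j $ k = complex_of_real (\<Sum>i\<in>UNIV. \<Sum>l\<in>UNIV. lam i j k l *
   (2*(Re (Dvec q $ i)*Re (Dvec q $ l) + Im (Dvec q $ i)*Im (Dvec q $ l))))"
  unfolding Mmat_def by (simp add: cnj_aux of_real_sum)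

lemma MR_eq: "MmatR lam q $ j $ k = (\<Sum>i\<in>UNIV. \<Sum>l\<in>UNIV. lam i j k l *
   (2*(Re (Dvec q $ i)*Re (Dvec q $ l) + Im (Dvec q $ i)*Im (Dvec q $ l))))"
  unfolding MmatR_def by (simp add: M_eq)

definition PP :: "(3 \<Rightarrow> 3 \<Rightarrow> 3 \<Rightarrow> 3 \<Rightarrow> real) \<Rightarrow> real^3 \<Rightarrow> real^3 \<Rightarrow> real" where
  "PP lam v x = (\<Sum>i\<in>UNIV. \<Sum>j\<in>UNIV. \<Sum>k\<in>UNIV. \<Sum>l\<in>UNIV. v$i * x$j * lam i j k l * (v$k * x$l))"

definition SS :: "real^3 \<Rightarrow> real^3 \<Rightarrow> real^3^3" where
  "SS v x = (\<chi> i j. (v$i * x$j + x$i * v$j)/2)"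

lemma quad_split:
  assumes minor2: "\<And>i j k l. lam i j k l = lam i j l k"
  shows "x \<bullet> (MmatR lam q *v x) = 2 * PP lam (\<chi> i. Re (Dvec q $ i)) x + 2 * PP lam (\<chi> i. Im (Dvec q $ i)) x"
proof -
  have "PP lam v x = (\<Sum>i\<in>UNIV. \<Sum>j\<in>UNIV. \<Sum>k\<in>UNIV. \<Sum>l\<in>UNIV. v$i * x$j * lam i j l k * (v$k * x$l))" for v
    unfolding PP_def using minor2 by presburger
  then show ?thesis
    unfolding inner_vec_def matrix_vector_mult_def MR_eq
    by (simp add: sum_3 algebra_simps)
qed

lemma SS_form:
  assumes minor1: "\<And>i j k l. lam i j k l = lam j i k l"
    and minor2: "\<And>i j k l. lam i j k l = lam i j l k"
  shows "(\<Sum>i\<in>UNIV. \<Sum>j\<in>UNIV. \<Sum>k\<in>UNIV. \<Sum>l\<in>UNIV. SS v x $ i $ j * lam i j k l * SS v x $ k $ l) = PP lam v x"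
proof -
  have "(\<Sum>i\<in>UNIV. \<Sum>j\<in>UNIV. \<Sum>k\<in>UNIV. \<Sum>l\<in>UNIV. SS v x $ i $ j * lam i j k l * SS v x $ k $ l)
     = (\<Sum>i\<in>UNIV. \<Sum>j\<in>UNIV. \<Sum>k\<in>UNIV. \<Sum>l\<in>UNIV. (v$i * x$j * lam i j k l * (v$k * x$l)
        + v$i * x$j * lam i j l k * (x$k * v$l) + x$i * v$j * lam j i k l * (v$k * x$l)
        + x$i * v$j * lam j i l k * (x$k * v$l)) / 4)"
  proof -
    have "\<And>i j k l. lam i j l k = lam i j k l" "\<And>i j k l. lam j i k l = lam i j k l"
         "\<And>i j k l. lam j i l k = lam i j k l" using minor1 minor2 by metis+
    then show ?thesis unfolding SS_def by (simp add: algebra_simps add_divide_distrib)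
  qed
  also have "\<dots> = PP lam v x"
    unfolding PP_def by (simp add: sum_3 algebra_simps)
  finally show ?thesis .
qed



lemma SS_sym: "transpose (SS v x) = SS v x"
  unfolding SS_def transpose_def by (simp add: vec_eq_iff algebra_simps)

lemma SS_nz: assumes "v \<noteq> 0" "x \<noteq> 0" shows "SS v x \<noteq> 0"
proof
  assume h: "SS v x = 0"
  then have h': "\<And>i j. v$i * x$j + x$i * v$j = 0" unfolding SS_def by (simp add: vec_eq_iff)
  obtain i where i: "v$i \<noteq> 0" using assms(1) by (auto simp: vec_eq_iff)
  obtain j where j: "x$j \<noteq> 0" using assms(2) by (auto simp: vec_eq_iff)
  have "x$i = 0" using h'[of i i] i by simp
  then have "v$i * x$j = 0" using h'[of i j] by simp
  then show False using i j by simp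
qed

lemma sym_M:
  assumes minor1: "\<And>i j k l. lam i j k l = lam j i k l"
    and minor2: "\<And>i j k l. lam i j k l = lam i j l k"
    and major: "\<And>i j k l. lam i j k l = lam k l i j"
  shows "Mmat lam q $ j $ k = Mmat lam q $ k $ j"
proof -
  have e: "lam i k j l = lam l j k i" for i l by (metis minor1 minor2 major)
  show ?thesis unfolding M_eq
    by (simp add: sum_3 e algebra_simps)
qed

lemma D_comp:
  "Dvec q $ i = (let s1 = (q$1+q$2+q$3)/2; s2 = (q$1-q$2-q$3)/2; s3 = (-q$1+q$2-q$3)/2; s4 = (-q$1-q$2+q$3)/2;
     E = (\<lambda>s. exp (\<i> * complex_of_real s)) in
     of_real (vector [1/2, 1/2, 1/2] $ i) * E s1 + of_real (vector [1/2, -1/2, -1/2] $ i) * E s2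
     + of_real (vector [-1/2, 1/2, -1/2] $ i) * E s3 + of_real (vector [-1/2, -1/2, 1/2] $ i) * E s4)"
proof -
  have d: "distinct [vector [1/2, 1/2, 1/2], vector [1/2, -1/2, -1/2],
           vector [-1/2, 1/2, -1/2], vector [-1/2, -1/2, 1/2::real] :: real^3]"
    by (simp add: vec_eq_iff forall_3)
  then show ?thesis unfolding Dvec_def tetT_def
    by (simp add: inner_vec_def sum_3 Let_def algebra_simps diff_divide_distrib add_divide_distrib)
qed



lemma lin4: fixes z1 z2 z3 z4 :: complex
  shows "(z1 + z2 - z3 - z4 = 0 \<and> z1 - z2 + z3 - z4 = 0 \<and> z1 - z2 - z3 + z4 = 0) \<longleftrightarrow> (z2 = z1 \<and> z3 = z1 \<and> z4 = z1)"
proof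
  assume h: "z1 + z2 - z3 - z4 = 0 \<and> z1 - z2 + z3 - z4 = 0 \<and> z1 - z2 - z3 + z4 = 0"
  then have h1: "z1 + z2 - z3 - z4 = 0" and h2: "z1 - z2 + z3 - z4 = 0" and h3: "z1 - z2 - z3 + z4 = 0" by auto
  have a: "2*(z1 - z4) = (z1+z2-z3-z4) + (z1-z2+z3-z4)" by (simp add: algebra_simps)
  have b: "2*(z1 - z3) = (z1+z2-z3-z4) + (z1-z2-z3+z4)" by (simp add: algebra_simps)
  have c: "2*(z1 - z2) = (z1-z2+z3-z4) + (z1-z2-z3+z4)" by (simp add: algebra_simps)
  have "2*(z1 - z4) = 0" unfolding a h1 h2 by simp
  moreover have "2*(z1 - z3) = 0" unfolding b h1 h3 by simp
  moreover have "2*(z1 - z2) = 0" unfolding c h2 h3 by simp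
  ultimately show "z2 = z1 \<and> z3 = z1 \<and> z4 = z1" by simp
qed simp

lemma lin4': fixes z1 z2 z3 z4 :: complex
  shows "(complex_of_real (1/2) * z1 + complex_of_real (1/2) * z2 + complex_of_real (-1/2) * z3 + complex_of_real (-1/2) * z4 = 0 \<and>
          complex_of_real (1/2) * z1 + complex_of_real (-1/2) * z2 + complex_of_real (1/2) * z3 + complex_of_real (-1/2) * z4 = 0 \<and>
          complex_of_real (1/2) * z1 + complex_of_real (-1/2) * z2 + complex_of_real (-1/2) * z3 + complex_of_real (1/2) * z4 = 0)
     \<longleftrightarrow> (z2 = z1 \<and> z3 = z1 \<and> z4 = z1)"
proof -
  have e1: "complex_of_real (1/2) * z1 + complex_of_real (1/2) * z2 + complex_of_real (-1/2) * z3 + complex_of_real (-1/2) * z4 = (z1 + z2 - z3 - z4)/2"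
   "complex_of_real (1/2) * z1 + complex_of_real (-1/2) * z2 + complex_of_real (1/2) * z3 + complex_of_real (-1/2) * z4 = (z1 - z2 + z3 - z4)/2"
   "complex_of_real (1/2) * z1 + complex_of_real (-1/2) * z2 + complex_of_real (-1/2) * z3 + complex_of_real (1/2) * z4 = (z1 - z2 - z3 + z4)/2"
    by (simp_all add: complex_eq_iff)
  show ?thesis unfolding e1 using lin4 by simp
qed

lemma D_zero_iff: "Dvec q = 0 \<longleftrightarrow>
   (let E = (\<lambda>s. exp (\<i> * complex_of_real s)) in
    E ((q$1-q$2-q$3)/2) = E ((q$1+q$2+q$3)/2) \<and> E ((-q$1+q$2-q$3)/2) = E ((q$1+q$2+q$3)/2)
    \<and> E ((-q$1-q$2+q$3)/2) = E ((q$1+q$2+q$3)/2))"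
proof -
  have "Dvec q = 0 \<longleftrightarrow> Dvec q $ 1 = 0 \<and> Dvec q $ 2 = 0 \<and> Dvec q $ 3 = 0"
    by (simp add: vec_eq_iff forall_3)
  also have "\<dots> \<longleftrightarrow> (let E = (\<lambda>s. exp (\<i> * complex_of_real s)) in
    E ((q$1-q$2-q$3)/2) = E ((q$1+q$2+q$3)/2) \<and> E ((-q$1+q$2-q$3)/2) = E ((q$1+q$2+q$3)/2)
    \<and> E ((-q$1-q$2+q$3)/2) = E ((q$1+q$2+q$3)/2))"
    unfolding D_comp[of q 1] D_comp[of q 2] D_comp[of q 3] Let_def vector_3
    by (rule lin4')
  finally show ?thesis .
qed

lemma E_eq: "exp (\<i> * complex_of_real s) = exp (\<i> * complex_of_real t) \<longleftrightarrow> (\<exists>n::int. s - t = 2*pi*n)"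
proof -
  have "exp (\<i> * complex_of_real s) = exp (\<i> * complex_of_real t) \<longleftrightarrow>
     (\<exists>n::int. \<i> * complex_of_real s = \<i> * complex_of_real t + (of_int (2 * n) * pi) * \<i>)"
    by (rule exp_eq)
  also have "\<dots> \<longleftrightarrow> (\<exists>n::int. s - t = 2*pi*n)"
    by (simp add: complex_eq_iff algebra_simps)
  finally show ?thesis .
qed



lemma par: fixes x y z :: real
  shows "((\<exists>n::int. x+y = 2*pi*n) \<and> (\<exists>n::int. y+z = 2*pi*n) \<and> (\<exists>n::int. x+z = 2*pi*n)) \<longleftrightarrow>
     ((\<exists>(a::int) (b::int) (c::int). x = 2*pi*a \<and> y = 2*pi*b \<and> z = 2*pi*c) \<or>
      (\<exists>(a::int) (b::int) (c::int). x = pi + 2*pi*a \<and> y = pi + 2*pi*b \<and> z = pi + 2*pi*c))"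
proof
  assume "(\<exists>n::int. x+y = 2*pi*n) \<and> (\<exists>n::int. y+z = 2*pi*n) \<and> (\<exists>n::int. x+z = 2*pi*n)"
  then obtain n1 n2 n3 :: int where h1: "x+y = 2*pi*n1" and h2: "y+z = 2*pi*n2" and h3: "x+z = 2*pi*n3" by blast
  have hx: "x = pi * of_int (n1+n3-n2)" using h1 h2 h3 by (simp add: algebra_simps)
  have hy: "y = pi * of_int (n1+n2-n3)" using h1 h2 h3 by (simp add: algebra_simps)
  have hz: "z = pi * of_int (n2+n3-n1)" using h1 h2 h3 by (simp add: algebra_simps)
  have e2: "n1+n2-n3 = (n1+n3-n2) + 2*(n2-n3)" and e3: "n2+n3-n1 = (n1+n3-n2) + 2*(n2-n1)" by simp_all
  show "(\<exists>(a::int) (b::int) (c::int). x = 2*pi*a \<and> y = 2*pi*b \<and> z = 2*pi*c) \<or>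
      (\<exists>(a::int) (b::int) (c::int). x = pi + 2*pi*a \<and> y = pi + 2*pi*b \<and> z = pi + 2*pi*c)"
  proof (cases "even (n1+n3-n2)")
    case True
    then obtain a where a: "n1+n3-n2 = 2*a" by blast
    have "x = 2*pi*a" "y = 2*pi*(a + (n2-n3))" "z = 2*pi*(a+(n2-n1))"
      using hx hy hz a e2 e3 by (simp_all add: algebra_simps)
    then show ?thesis by blast
  next
    case False
    then obtain a where a: "n1+n3-n2 = 2*a+1" using oddE by blast
    have "x = pi + 2*pi*a" "y = pi + 2*pi*(a + (n2-n3))" "z = pi + 2*pi*(a+(n2-n1))"
      using hx hy hz a e2 e3 by (simp_all add: algebra_simps)
    then show ?thesis by blast
  qed
next
  assume "(\<exists>(a::int) (b::int) (c::int). x = 2*pi*a \<and> y = 2*pi*b \<and> z = 2*pi*c) \<or>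
      (\<exists>(a::int) (b::int) (c::int). x = pi + 2*pi*a \<and> y = pi + 2*pi*b \<and> z = pi + 2*pi*c)"
  then show "(\<exists>n::int. x+y = 2*pi*n) \<and> (\<exists>n::int. y+z = 2*pi*n) \<and> (\<exists>n::int. x+z = 2*pi*n)"
  proof
    assume "\<exists>(a::int) (b::int) (c::int). x = 2*pi*a \<and> y = 2*pi*b \<and> z = 2*pi*c"
    then obtain a b c :: int where "x = 2*pi*a" "y = 2*pi*b" "z = 2*pi*c" by blast
    then have "x+y = 2*pi*(a+b)" "y+z = 2*pi*(b+c)" "x+z = 2*pi*(a+c)" by (simp_all add: algebra_simps)
    then show ?thesis by blast
  next
    assume "\<exists>(a::int) (b::int) (c::int). x = pi + 2*pi*a \<and> y = pi + 2*pi*b \<and> z = pi + 2*pi*c"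
    then obtain a b c :: int where "x = pi + 2*pi*a" "y = pi + 2*pi*b" "z = pi + 2*pi*c" by blast
    then have "x+y = 2*pi*(a+b+1)" "y+z = 2*pi*(b+c+1)" "x+z = 2*pi*(a+c+1)" by (simp_all add: algebra_simps)
    then show ?thesis by blast
  qed
qed

lemma neg_ex: "(\<exists>n::int. - (u::real) = 2*pi*n) \<longleftrightarrow> (\<exists>n::int. u = 2*pi*n)"
proof
  assume "\<exists>n::int. - u = 2*pi*n" then obtain n::int where "-u = 2*pi*n" by blast
  then have "u = 2*pi * of_int (-n)" by simp
  then show "\<exists>n::int. u = 2*pi*n" by blast
next
  assume "\<exists>n::int. u = 2*pi*n" then obtain n::int where "u = 2*pi*n" by blast
  then have "-u = 2*pi * of_int (-n)" by simp
  then show "\<exists>n::int. -u = 2*pi*n" by blast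
qed

lemma D_set: "Dvec q \<noteq> 0 \<longleftrightarrow>
         q \<notin> ({p. \<forall>i. \<exists>n::int. p $ i = 2 * pi * of_int n}
              \<union> {p. \<forall>i. \<exists>n::int. p $ i = pi + 2 * pi * of_int n})"
proof -
  have d: "(q$1-q$2-q$3)/2 - (q$1+q$2+q$3)/2 = - (q$2+q$3)"
    "(-q$1+q$2-q$3)/2 - (q$1+q$2+q$3)/2 = - (q$1+q$3)"
    "(-q$1-q$2+q$3)/2 - (q$1+q$2+q$3)/2 = - (q$1+q$2)" by (simp_all add: field_simps)
  have "Dvec q = 0 \<longleftrightarrow> ((\<exists>n::int. q$1+q$2 = 2*pi*n) \<and> (\<exists>n::int. q$2+q$3 = 2*pi*n) \<and> (\<exists>n::int. q$1+q$3 = 2*pi*n))"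
    unfolding D_zero_iff Let_def E_eq d neg_ex by blast
  also have "\<dots> \<longleftrightarrow> q \<in> ({p. \<forall>i. \<exists>n::int. p $ i = 2 * pi * of_int n}
              \<union> {p. \<forall>i. \<exists>n::int. p $ i = pi + 2 * pi * of_int n})"
    unfolding par by (simp add: forall_3; blast)
  finally show ?thesis by blast
qed


lemma Q_nonneg:
  assumes posdef: "\<And>\<xi> :: real^3^3. transpose \<xi> = \<xi> \<Longrightarrow> \<xi> \<noteq> 0 \<Longrightarrow>
        (\<Sum>i\<in>UNIV. \<Sum>j\<in>UNIV. \<Sum>k\<in>UNIV. \<Sum>l\<in>UNIV. \<xi> $ i $ j * lam i j k l * \<xi> $ k $ l) > 0"
  shows "0 \<le> (\<Sum>i\<in>UNIV. \<Sum>j\<in>UNIV. \<Sum>k\<in>UNIV. \<Sum>l\<in>UNIV. SS v x $ i $ j * lam i j k l * SS v x $ k $ l)"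
proof (cases "SS v x = 0")
  case True then show ?thesis by simp
next
  case False then show ?thesis using posdef[OF SS_sym] by (simp add: less_imp_le)
qed

theorem mainTheorem2:
  fixes lam :: "3 \<Rightarrow> 3 \<Rightarrow> 3 \<Rightarrow> 3 \<Rightarrow> real" and q :: "real^3"
  assumes minor1: "\<And>i j k l. lam i j k l = lam j i k l"
    and minor2: "\<And>i j k l. lam i j k l = lam i j l k"
    and major: "\<And>i j k l. lam i j k l = lam k l i j"
    and posdef: "\<And>\<xi> :: real^3^3. transpose \<xi> = \<xi> \<Longrightarrow> \<xi> \<noteq> 0 \<Longrightarrow>
        (\<Sum>i\<in>UNIV. \<Sum>j\<in>UNIV. \<Sum>k\<in>UNIV. \<Sum>l\<in>UNIV. \<xi> $ i $ j * lam i j k l * \<xi> $ k $ l) > 0"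
  shows "(\<forall>j k. Im (Mmat lam q $ j $ k) = 0)
    \<and> (\<forall>j k. Mmat lam q $ j $ k = Mmat lam q $ k $ j)
    \<and> (\<forall>x :: real^3. 0 \<le> x \<bullet> (MmatR lam q *v x))
    \<and> ((\<forall>x :: real^3. x \<noteq> 0 \<longrightarrow> 0 < x \<bullet> (MmatR lam q *v x)) \<longleftrightarrow> Dvec q \<noteq> 0)
    \<and> (Dvec q \<noteq> 0 \<longrightarrow> invertible (MmatR lam q))
    \<and> (Dvec q \<noteq> 0 \<longleftrightarrow>
         q \<notin> ({p. \<forall>i. \<exists>n::int. p $ i = 2 * pi * of_int n}
              \<union> {p. \<forall>i. \<exists>n::int. p $ i = pi + 2 * pi * of_int n}))"
proof -
  define a where "a = (\<chi> i. Re (Dvec q $ i))"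
  define b where "b = (\<chi> i. Im (Dvec q $ i))"
  have Qf: "x \<bullet> (MmatR lam q *v x) = 2 * PP lam a x + 2 * PP lam b x" for x
    unfolding a_def b_def by (rule quad_split[OF minor2])
  have PPnn: "0 \<le> PP lam v x" for v x
    using Q_nonneg[OF posdef, of v x] SS_form[OF minor1 minor2, of v x] by simp
  have PPpos: "0 < PP lam v x" if "v \<noteq> 0" "x \<noteq> 0" for v x
    using posdef[OF SS_sym SS_nz[OF that]] SS_form[OF minor1 minor2, of v x] by simp
  have ab: "Dvec q \<noteq> 0 \<longleftrightarrow> a \<noteq> 0 \<or> b \<noteq> 0"
    unfolding a_def b_def by (auto simp: vec_eq_iff complex_eq_iff)
  have nn: "\<forall>x :: real^3. 0 \<le> x \<bullet> (MmatR lam q *v x)"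
    using PPnn Qf by (simp add: add_nonneg_nonneg)
  have pd: "(\<forall>x :: real^3. x \<noteq> 0 \<longrightarrow> 0 < x \<bullet> (MmatR lam q *v x)) \<longleftrightarrow> Dvec q \<noteq> 0"
  proof
    assume h: "\<forall>x :: real^3. x \<noteq> 0 \<longrightarrow> 0 < x \<bullet> (MmatR lam q *v x)"
    show "Dvec q \<noteq> 0"
    proof
      assume "Dvec q = 0"
      then have "a = 0" "b = 0" using ab by auto
      then have "PP lam a x = 0" "PP lam b x = 0" for x unfolding PP_def by simp_all
      moreover have "(1::real^3) \<noteq> 0" by (simp add: vec_eq_iff)
      ultimately have "1 \<bullet> (MmatR lam q *v (1::real^3)) = 0" "(1::real^3) \<noteq> 0" using Qf[of 1] by simp_all
      then show False using h by (metis less_irrefl)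
    qed
  next
    assume "Dvec q \<noteq> 0"
    then have "a \<noteq> 0 \<or> b \<noteq> 0" using ab by simp
    then show "\<forall>x :: real^3. x \<noteq> 0 \<longrightarrow> 0 < x \<bullet> (MmatR lam q *v x)"
      using PPpos PPnn Qf by (smt (verit))
  qed
  have inv: "Dvec q \<noteq> 0 \<longrightarrow> invertible (MmatR lam q)"
  proof
    assume "Dvec q \<noteq> 0"
    then have h: "\<forall>x :: real^3. x \<noteq> 0 \<longrightarrow> 0 < x \<bullet> (MmatR lam q *v x)" using pd by simp
    have "\<forall>x. MmatR lam q *v x = 0 \<longrightarrow> x = 0"
    proof (intro allI impI)
      fix x :: "real^3" assume "MmatR lam q *v x = 0"
      then show "x = 0" using h by (metis inner_zero_right less_irrefl)
    qed
    then show "invertible (MmatR lam q)"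
      unfolding invertible_left_inverse matrix_left_invertible_ker[symmetric] .
  qed
  have im: "\<forall>j k. Im (Mmat lam q $ j $ k) = 0" by (simp add: M_eq)
  have sy: "\<forall>j k. Mmat lam q $ j $ k = Mmat lam q $ k $ j" using sym_M[where lam=lam, OF minor1 minor2 major] by blast
  show ?thesis using im sy nn pd inv D_set by blast
qed

end
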